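(* Let $k\geq 2$ and $n\geq 3$ be integers. If $n\nrightarrow(3)_k^2$, then $2^n\nrightarrow(5)_k^3$.
   Context: For $m\in\mathbb N$ write $[m]=\{0,\dots,m-1\}$. For $n>r\geq1$, $k\geq2$, $n\geq s>r$, the relation $n\to(s)_k^r$ means that every colouring of the $r$-element subsets of $[n]$ with $k$ colours admits a subset of $[n]$ of size $s$ all of whose $r$-subsets receive the same colour; $n\nrightarrow(s)_k^r$ is its negation. *)

theory Defs
  imports Main
begin

text \<open>Ramsey arrow relation: n \<rightarrow> (s)^r_k. Colours are 0..k-1; [m] = {0..<m}.
  A colouring is any function on sets; only its values on r-subsets of [n] matter,
  and those must lie in [k].\<close>

definition arrows :: "nat \<Rightarrow> nat \<Rightarrow> nat \<Rightarrow> nat \<Rightarrow> bool" where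
  "arrows n s k r \<longleftrightarrow>
     (\<forall>c :: nat set \<Rightarrow> nat.
        (\<forall>X. X \<subseteq> {..<n} \<and> card X = r \<longrightarrow> c X < k) \<longrightarrow>
        (\<exists>S j. S \<subseteq> {..<n} \<and> card S = s \<and>
               (\<forall>X. X \<subseteq> S \<and> card X = r \<longrightarrow> c X = j)))"

end

theory Submission
  imports Defs
begin

definition dl :: "nat \<Rightarrow> nat \<Rightarrow> nat" where
  "dl x y = (LEAST i. x div 2^Suc i = y div 2^Suc i)"

lemma dl_ex: "\<exists>i. (x::nat) div 2^Suc i = y div 2^Suc i"
proof -
  have "x < 2^Suc (x+y)" "y < 2^Suc(x+y)"
    by (metis add_lessD1 less_exp less_trans lessI power_strict_increasing_iff one_less_numeral_iff semiring_norm(76)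
        add.commute)+
  then show ?thesis by (intro exI[of _ "x+y"]) simp
qed

lemma up: "(x::nat) div 2^i = y div 2^i \<Longrightarrow> i \<le> j \<Longrightarrow> x div 2^j = y div 2^j"
proof -
  assume a: "x div 2^i = y div 2^i" "i \<le> j"
  have "(2::nat)^j = 2^i * 2^(j-i)" using a(2) by (simp flip: power_add)
  then show ?thesis using a(1) by (simp add: div_mult2_eq)
qed

lemma dl_char: "dl x y \<le> i \<longleftrightarrow> x div 2^Suc i = y div 2^Suc i"
proof
  assume "dl x y \<le> i"
  moreover have "x div 2^Suc (dl x y) = y div 2^Suc (dl x y)"
    unfolding dl_def using dl_ex[of x y] by (rule LeastI_ex)
  ultimately show "x div 2^Suc i = y div 2^Suc i" using up by (meson Suc_le_mono)
next
  assume "x div 2^Suc i = y div 2^Suc i"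
  then show "dl x y \<le> i" unfolding dl_def by (rule Least_le)
qed

lemma divmono3: "(a::nat) \<le> b \<Longrightarrow> b \<le> c \<Longrightarrow>
   (a div m = c div m \<longleftrightarrow> a div m = b div m \<and> b div m = c div m)"
  by (metis div_le_mono le_antisym)

lemma dl_max: assumes "a \<le> b" "b \<le> c" shows "dl a c = max (dl a b) (dl b c)"
proof -
  have "\<And>i. dl a c \<le> i \<longleftrightarrow> dl a b \<le> i \<and> dl b c \<le> i"
    unfolding dl_char using divmono3[OF assms] by blast
  then show ?thesis by (metis le_antisym max.bounded_iff order_refl max.cobounded1 max.cobounded2)
qed

lemma dl_diff: assumes "x < y" shows "x div 2^(dl x y) \<noteq> y div 2^(dl x y)"
proof (cases "dl x y")
  case 0 then show ?thesis using assms by simp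
next
  case (Suc e)
  then have "\<not> dl x y \<le> e" by simp
  then have "x div 2^Suc e \<noteq> y div 2^Suc e" using dl_char by blast
  then show ?thesis using Suc by simp
qed

lemma three_div: "(p::nat) < q \<Longrightarrow> q < r \<Longrightarrow> p div 2 \<noteq> r div 2"
  by presburger

lemma dl_neq: assumes "a < b" "b < c" shows "dl a b \<noteq> dl b c"
proof
  assume eq: "dl a b = dl b c"
  define d where "d = dl a b"
  have 1: "a div 2^Suc d = b div 2^Suc d" "b div 2^Suc d = c div 2^Suc d"
    using dl_char[of a b d] dl_char[of b c d] eq d_def by auto
  have 2: "a div 2^d \<noteq> b div 2^d" "b div 2^d \<noteq> c div 2^d"
    using dl_diff[OF assms(1)] dl_diff[OF assms(2)] eq d_def by auto
  have "a div 2^d \<le> b div 2^d" "b div 2^d \<le> c div 2^d" using assms div_le_mono by auto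
  with 2 have "a div 2^d < b div 2^d" "b div 2^d < c div 2^d" by auto
  then have "a div 2^d div 2 \<noteq> c div 2^d div 2" by (rule three_div)
  moreover have "\<And>x::nat. x div 2^Suc d = x div 2^d div 2" by (metis div_mult2_eq power_Suc2)
  ultimately show False using 1 by simp
qed

lemma dl_bound: assumes "x < 2^n" "y < 2^n" "n \<ge> 1" shows "dl x y < n"
proof -
  have "dl x y \<le> n - 1" unfolding dl_char using assms by simp
  then show ?thesis using assms(3) by simp
qed

definition D :: "nat set \<Rightarrow> nat set" where
  "D T = {dl x y | x y. x \<in> T \<and> y \<in> T \<and> x < y}"

lemma D3: assumes "a < b" "b < c" shows "D {a,b,c} = {dl a b, dl b c}"
proof -
  have "dl a c = max (dl a b) (dl b c)" using assms by (intro dl_max) auto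
  then have "dl a c \<in> {dl a b, dl b c}" by (simp add: max_def)
  then show ?thesis unfolding D_def using assms by auto
qed

lemma list3: "length L = 3 \<Longrightarrow> \<exists>a b c. L = [a,b,c]"
  by (auto simp add: length_Suc_conv numeral_eq_Suc)

lemma list5: "length L = 5 \<Longrightarrow> \<exists>a b c d e. L = [a,b,c,d,e]"
  by (auto simp add: length_Suc_conv numeral_eq_Suc)

lemma sort3: assumes "card (T::nat set) = 3"
  obtains a b c where "a < b" "b < c" "T = {a,b,c}"
proof -
  have f: "finite T" using assms card.infinite by fastforce
  let ?L = "sorted_list_of_set T"
  have "length ?L = 3" using assms by simp
  then obtain a b c where L: "?L = [a,b,c]" using list3 by blast
  have "sorted_wrt (<) ?L" by simp
  then have "a < b" "b < c" using L by auto
  moreover have "T = {a,b,c}" using L f set_sorted_list_of_set[OF f] by (metis empty_set list.simps(15))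
  ultimately show ?thesis using that by blast
qed

lemma sort5: assumes "card (T::nat set) = 5"
  obtains a b c d e where "a < b" "b < c" "c < d" "d < e" "T = {a,b,c,d,e}"
proof -
  have f: "finite T" using assms card.infinite by fastforce
  let ?L = "sorted_list_of_set T"
  have "length ?L = 5" using assms by simp
  then obtain a b c d e where L: "?L = [a,b,c,d,e]" using list5 by blast
  have "sorted_wrt (<) ?L" by simp
  then have "a < b" "b < c" "c < d" "d < e" using L by auto
  moreover have "T = {a,b,c,d,e}" using L f set_sorted_list_of_set[OF f] by (metis empty_set list.simps(15))
  ultimately show ?thesis using that by blast
qed

lemma four:
  fixes col :: "nat set \<Rightarrow> nat"
  assumes o: "a < b" "b < c" "c < e"
    and c1: "col {dl a b, dl b c} = j" and c2: "col {dl b c, dl c e} = j"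
    and c3: "col {dl a b, dl b e} = j" and c4: "col {dl a c, dl c e} = j"
    and np: "\<not> (dl a b < dl b c \<and> dl c e < dl b c)"
  shows "\<exists>\<alpha> \<in> {dl a b, dl b c, dl c e}. \<exists>\<beta> \<in> {dl a b, dl b c, dl c e}. \<exists>\<gamma> \<in> {dl a b, dl b c, dl c e}.
     \<alpha> \<noteq> \<beta> \<and> \<beta> \<noteq> \<gamma> \<and> \<alpha> \<noteq> \<gamma> \<and> col {\<alpha>,\<beta>} = j \<and> col {\<beta>,\<gamma>} = j \<and> col {\<alpha>,\<gamma>} = j"
proof -
  define e1 e2 e3 where "e1 = dl a b" "e2 = dl b c" "e3 = dl c e"
  have m1: "dl b e = max e2 e3" using dl_max[of b c e] o e1_e2_e3_def by simp
  have m2: "dl a c = max e1 e2" using dl_max[of a b c] o e1_e2_e3_def by simp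
  have n1: "e1 \<noteq> e2" "e2 \<noteq> e3" using dl_neq o e1_e2_e3_def by auto
  have n3: "dl a c \<noteq> e3" using dl_neq[of a c e] o e1_e2_e3_def by auto
  note cs = c1 c2 c3 c4 np
  show ?thesis
  proof (cases "e1 < e2")
    case True
    then have "e2 < e3" using np n1 e1_e2_e3_def by auto
    then have "col {e1, e3} = j" using c3 m1 e1_e2_e3_def by (simp add: max_def)
    then show ?thesis using c1 c2 True \<open>e2 < e3\<close> e1_e2_e3_def
      by (intro bexI[of _ e1] bexI[of _ e2] bexI[of _ e3]) auto
  next
    case False
    then have g: "e2 < e1" using n1 by auto
    show ?thesis
    proof (cases "e3 < e2")
      case True
      then have "col {e1, e3} = j" using c4 m2 g e1_e2_e3_def by (simp add: max_def)
      then show ?thesis using c1 c2 True g e1_e2_e3_def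
        by (intro bexI[of _ e1] bexI[of _ e2] bexI[of _ e3]) auto
    next
      case False
      then have h: "e2 < e3" using n1 by auto
      then have "col {e1, e3} = j" using c3 m1 e1_e2_e3_def by (simp add: max_def)
      moreover have "e1 \<noteq> e3" using n3 m2 g by (simp add: max_def)
      ultimately show ?thesis using c1 c2 h g e1_e2_e3_def
        by (intro bexI[of _ e1] bexI[of _ e2] bexI[of _ e3]) auto
    qed
  qed
qed

lemma tri_all:
  fixes col :: "nat set \<Rightarrow> nat"
  assumes "\<alpha> \<noteq> \<beta>" "\<beta> \<noteq> \<gamma>" "\<alpha> \<noteq> \<gamma>" "col {\<alpha>,\<beta>} = j" "col {\<beta>,\<gamma>} = j" "col {\<alpha>,\<gamma>} = j"
    and "X \<subseteq> {\<alpha>,\<beta>,\<gamma>}" "card X = 2"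
  shows "col X = j"
proof -
  obtain u v where X: "X = {u,v}" "u \<noteq> v" using assms(8) by (auto simp: card_2_iff)
  then have "u \<in> {\<alpha>,\<beta>,\<gamma>}" "v \<in> {\<alpha>,\<beta>,\<gamma>}" using assms(7) by auto
  then show ?thesis using X assms(1-6) by (auto simp: insert_commute)
qed

lemma trip:
  fixes col :: "nat set \<Rightarrow> nat"
  assumes H: "\<forall>X. X \<subseteq> S \<and> card X = 3 \<longrightarrow> col (D X) = j"
    and "a < b" "b < c" "a \<in> S" "b \<in> S" "c \<in> S"
  shows "col {dl a b, dl b c} = j"
proof -
  have "card {a,b,c} = 3" using assms(2,3) by auto
  then have "col (D {a,b,c}) = j" using H assms(4-6) by auto
  then show ?thesis using D3 assms(2,3) by simp
qed

theorem mainTheorem8: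
  fixes k n :: nat
  assumes "k \<ge> 2" and "n \<ge> 3"
    and "\<not> arrows n 3 k 2"
  shows "\<not> arrows (2 ^ n) 5 k 3"
proof -
  have "\<exists>c::nat set \<Rightarrow> nat. (\<forall>X. X \<subseteq> {..<n} \<and> card X = 2 \<longrightarrow> c X < k) \<and>
     \<not> (\<exists>S j. S \<subseteq> {..<n} \<and> card S = 3 \<and> (\<forall>X. X \<subseteq> S \<and> card X = 2 \<longrightarrow> c X = j))"
    using assms(3) unfolding arrows_def by (simp only: not_all not_imp)
  then obtain c :: "nat set \<Rightarrow> nat" where cb: "\<forall>X. X \<subseteq> {..<n} \<and> card X = 2 \<longrightarrow> c X < k"
    and nomono: "\<not> (\<exists>S j. S \<subseteq> {..<n} \<and> card S = 3 \<and> (\<forall>X. X \<subseteq> S \<and> card X = 2 \<longrightarrow> c X = j))"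
    by blast
  have n1: "n \<ge> 1" using assms(2) by simp
  have P1: "\<forall>T. T \<subseteq> {..<2^n} \<and> card T = 3 \<longrightarrow> c (D T) < k"
  proof (intro allI impI)
    fix T :: "nat set" assume T: "T \<subseteq> {..<2^n} \<and> card T = 3"
    then obtain a b cc where o: "a < b" "b < cc" "T = {a,b,cc}" using sort3 by blast
    have "D T = {dl a b, dl b cc}" using D3 o by simp
    moreover have "{dl a b, dl b cc} \<subseteq> {..<n}" using dl_bound[OF _ _ n1] T o by auto
    moreover have "card {dl a b, dl b cc} = 2" using dl_neq[OF o(1,2)] by simp
    ultimately show "c (D T) < k" using cb by simp
  qed
  have P2: "\<not> (\<exists>S j. S \<subseteq> {..<2^n} \<and> card S = 5 \<and> (\<forall>X. X \<subseteq> S \<and> card X = 3 \<longrightarrow> c (D X) = j))"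
  proof
    assume "\<exists>S j. S \<subseteq> {..<2^n} \<and> card S = 5 \<and> (\<forall>X. X \<subseteq> S \<and> card X = 3 \<longrightarrow> c (D X) = j)"
    then obtain S j where S: "S \<subseteq> {..<2^n}" "card S = 5"
      and H: "\<forall>X. X \<subseteq> S \<and> card X = 3 \<longrightarrow> c (D X) = j" by blast
    obtain x1 x2 x3 x4 x5 where o: "x1 < x2" "x2 < x3" "x3 < x4" "x4 < x5" "S = {x1,x2,x3,x4,x5}"
      using sort5[OF S(2)] by blast
    have mem: "x1 \<in> S" "x2 \<in> S" "x3 \<in> S" "x4 \<in> S" "x5 \<in> S" using o by auto
    have bnd: "\<And>x y. x \<in> S \<Longrightarrow> y \<in> S \<Longrightarrow> dl x y < n" using dl_bound[OF _ _ n1] S(1) by auto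
    have "\<exists>\<alpha> \<beta> \<gamma>. \<alpha> < n \<and> \<beta> < n \<and> \<gamma> < n \<and>
      \<alpha> \<noteq> \<beta> \<and> \<beta> \<noteq> \<gamma> \<and> \<alpha> \<noteq> \<gamma> \<and> c {\<alpha>,\<beta>} = j \<and> c {\<beta>,\<gamma>} = j \<and> c {\<alpha>,\<gamma>} = j"
    proof (cases "dl x1 x2 < dl x2 x3 \<and> dl x3 x4 < dl x2 x3")
      case False
      have "\<exists>\<alpha> \<in> {dl x1 x2, dl x2 x3, dl x3 x4}. \<exists>\<beta> \<in> {dl x1 x2, dl x2 x3, dl x3 x4}. \<exists>\<gamma> \<in> {dl x1 x2, dl x2 x3, dl x3 x4}.
     \<alpha> \<noteq> \<beta> \<and> \<beta> \<noteq> \<gamma> \<and> \<alpha> \<noteq> \<gamma> \<and> c {\<alpha>,\<beta>} = j \<and> c {\<beta>,\<gamma>} = j \<and> c {\<alpha>,\<gamma>} = j"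
        apply (rule four)
        apply (rule o(1))
        apply (rule o(2))
        apply (rule o(3))
        apply (rule trip[OF H]; (rule mem o)?)
        apply (rule trip[OF H]; (rule mem o)?)
        apply (rule trip[OF H]; (rule mem o less_trans[OF o(2) o(3)])?)
        apply (rule trip[OF H]; (rule mem o less_trans[OF o(1) o(2)])?)
        using False apply simp
        done
      then show ?thesis using bnd mem by blast
    next
      case True
      have "\<exists>\<alpha> \<in> {dl x2 x3, dl x3 x4, dl x4 x5}. \<exists>\<beta> \<in> {dl x2 x3, dl x3 x4, dl x4 x5}. \<exists>\<gamma> \<in> {dl x2 x3, dl x3 x4, dl x4 x5}.
     \<alpha> \<noteq> \<beta> \<and> \<beta> \<noteq> \<gamma> \<and> \<alpha> \<noteq> \<gamma> \<and> c {\<alpha>,\<beta>} = j \<and> c {\<beta>,\<gamma>} = j \<and> c {\<alpha>,\<gamma>} = j"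
        apply (rule four)
        apply (rule o(2))
        apply (rule o(3))
        apply (rule o(4))
        apply (rule trip[OF H]; (rule mem o)?)
        apply (rule trip[OF H]; (rule mem o)?)
        apply (rule trip[OF H]; (rule mem o less_trans[OF o(3) o(4)])?)
        apply (rule trip[OF H]; (rule mem o less_trans[OF o(2) o(3)])?)
        using True apply simp
        done
      then show ?thesis using bnd mem by blast
    qed
    then obtain \<alpha> \<beta> \<gamma> where t: "\<alpha> < n" "\<beta> < n" "\<gamma> < n"
      "\<alpha> \<noteq> \<beta>" "\<beta> \<noteq> \<gamma>" "\<alpha> \<noteq> \<gamma>" "c {\<alpha>,\<beta>} = j" "c {\<beta>,\<gamma>} = j" "c {\<alpha>,\<gamma>} = j" by blast
    have "{\<alpha>,\<beta>,\<gamma>} \<subseteq> {..<n} \<and> card {\<alpha>,\<beta>,\<gamma>} = 3" using t by auto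
    moreover have "\<forall>X. X \<subseteq> {\<alpha>,\<beta>,\<gamma>} \<and> card X = 2 \<longrightarrow> c X = j"
      using tri_all[OF t(4-9)] by blast
    ultimately show False using nomono by blast
  qed
  show ?thesis
  proof
    assume "arrows (2^n) 5 k 3"
    then have "(\<forall>X. X \<subseteq> {..<2^n} \<and> card X = 3 \<longrightarrow> c (D X) < k) \<longrightarrow>
        (\<exists>S j. S \<subseteq> {..<2^n} \<and> card S = 5 \<and> (\<forall>X. X \<subseteq> S \<and> card X = 3 \<longrightarrow> c (D X) = j))"
      unfolding arrows_def by (rule allE[where x="\<lambda>T. c (D T)"])
    then show False using P1 P2 by blast
  qed
qed

end
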